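(* Let $G=(V,E)$ be a weighted undirected graph with $|V|=N$, let $\epsilon\in(0,1)$, $\alpha>0$, and let $S_\epsilon,S\subset V$ be nonempty proper subsets with $\mathrm{vol}(S,G)>0$ such that: (1) $|S_\epsilon|<\epsilon N$ and $\mathrm{vol}(S_\epsilon,G)<\epsilon\,\mathrm{vol}(V,G)$; (2) $\bar d(S_\epsilon,G)<\frac{1-\epsilon}{2(1+\alpha)}\bar d(S,G)$; (3) $\phi(S,G)<\frac{\alpha(1-\epsilon)}{1+\alpha}$. Let $\delta=\frac{\alpha(1-\epsilon)}{1+\alpha}-\phi(S,G)$. If $\tau>0$ satisfies $\alpha\,\bar d(S_\epsilon,G)\le\tau\le\delta\,\bar d(S,G)$, and both $\mathrm{vol}(S_\epsilon,G_\tau)\le\mathrm{vol}(V\setminus S_\epsilon,G_\tau)$ and $\mathrm{vol}(S,G_\tau)\le\mathrm{vol}(V\setminus S,G_\tau)$, then $\mathrm{CoreCut}_\tau(S)<\mathrm{CoreCut}_\tau(S_\epsilon)$.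
   Context: $w_{ij}\ge 0$ are the symmetric edge weights, $d_i=\sum_j w_{ij}$, $\mathrm{vol}(S,G)=\sum_{i\in S}d_i$, $\mathrm{cut}(S,G)=\sum_{i\in S,\,j\in V\setminus S}w_{ij}$, $\phi(S,G)=\mathrm{cut}(S,G)/\mathrm{vol}(S,G)$, and $\bar d(S,G)=\mathrm{vol}(S,G)/|S|$. $G_\tau$ is the graph with adjacency matrix entries $w_{ij}+\tau/N$ for all $i,j$, so $\mathrm{vol}(S,G_\tau)=\mathrm{vol}(S,G)+\tau|S|$. For nonempty proper $S$ with $\mathrm{vol}(S,G_\tau)\le\mathrm{vol}(V\setminus S,G_\tau)$, $\mathrm{CoreCut}_\tau(S)=\dfrac{\mathrm{cut}(S,G)+\frac{\tau}{N}|S||V\setminus S|}{\mathrm{vol}(S,G)+\tau|S|}$. *)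

theory Defs
  imports "HOL-Analysis.Analysis"
begin

definition weighted_graph :: "'a set \<Rightarrow> ('a \<Rightarrow> 'a \<Rightarrow> real) \<Rightarrow> bool" where
  "weighted_graph V w \<longleftrightarrow> finite V \<and> V \<noteq> {} \<and>
     (\<forall>i\<in>V. \<forall>j\<in>V. w i j \<ge> 0 \<and> w i j = w j i)"

definition deg :: "'a set \<Rightarrow> ('a \<Rightarrow> 'a \<Rightarrow> real) \<Rightarrow> 'a \<Rightarrow> real" where
  "deg V w i = (\<Sum>j\<in>V. w i j)"

definition vol :: "'a set \<Rightarrow> ('a \<Rightarrow> 'a \<Rightarrow> real) \<Rightarrow> 'a set \<Rightarrow> real" where
  "vol V w S = (\<Sum>i\<in>S. deg V w i)"

definition cut :: "'a set \<Rightarrow> ('a \<Rightarrow> 'a \<Rightarrow> real) \<Rightarrow> 'a set \<Rightarrow> real" where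
  "cut V w S = (\<Sum>i\<in>S. \<Sum>j\<in>V - S. w i j)"

definition conductance :: "'a set \<Rightarrow> ('a \<Rightarrow> 'a \<Rightarrow> real) \<Rightarrow> 'a set \<Rightarrow> real" where
  "conductance V w S = cut V w S / vol V w S"

definition avg_deg :: "'a set \<Rightarrow> ('a \<Rightarrow> 'a \<Rightarrow> real) \<Rightarrow> 'a set \<Rightarrow> real" where
  "avg_deg V w S = vol V w S / real (card S)"

definition reg_graph :: "'a set \<Rightarrow> ('a \<Rightarrow> 'a \<Rightarrow> real) \<Rightarrow> real \<Rightarrow> 'a \<Rightarrow> 'a \<Rightarrow> real" where
  "reg_graph V w \<tau> i j = w i j + \<tau> / real (card V)"

definition core_cut :: "'a set \<Rightarrow> ('a \<Rightarrow> 'a \<Rightarrow> real) \<Rightarrow> real \<Rightarrow> 'a set \<Rightarrow> real" where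
  "core_cut V w \<tau> S =
     (cut V w S + \<tau> / real (card V) * real (card S) * real (card (V - S)))
     / (vol V w S + \<tau> * real (card S))"

end

theory Submission
  imports Defs
begin

theorem corollary4p7:
  fixes V :: "'a set" and w :: "'a \<Rightarrow> 'a \<Rightarrow> real"
    and \<epsilon> \<alpha> \<tau> :: real and S\<epsilon> S :: "'a set"
  assumes G: "weighted_graph V w"
    and eps: "0 < \<epsilon>" "\<epsilon> < 1"
    and alpha: "\<alpha> > 0"
    and Seps: "S\<epsilon> \<subseteq> V" "S\<epsilon> \<noteq> {}" "S\<epsilon> \<noteq> V"
    and SS: "S \<subseteq> V" "S \<noteq> {}" "S \<noteq> V"
    and volS: "vol V w S > 0"
    and c1: "real (card S\<epsilon>) < \<epsilon> * real (card V)"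
            "vol V w S\<epsilon> < \<epsilon> * vol V w V"
    and c2: "avg_deg V w S\<epsilon> < (1 - \<epsilon>) / (2 * (1 + \<alpha>)) * avg_deg V w S"
    and c3: "conductance V w S < \<alpha> * (1 - \<epsilon>) / (1 + \<alpha>)"
    and tau: "\<tau> > 0"
      "\<alpha> * avg_deg V w S\<epsilon> \<le> \<tau>"
      "\<tau> \<le> (\<alpha> * (1 - \<epsilon>) / (1 + \<alpha>) - conductance V w S) * avg_deg V w S"
    and bal: "vol V (reg_graph V w \<tau>) S\<epsilon> \<le> vol V (reg_graph V w \<tau>) (V - S\<epsilon>)"
             "vol V (reg_graph V w \<tau>) S \<le> vol V (reg_graph V w \<tau>) (V - S)"
  shows "core_cut V w \<tau> S < core_cut V w \<tau> S\<epsilon>"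
proof -
  have fin: "finite V" using G unfolding weighted_graph_def by auto
  have nn: "\<And>i j. i \<in> V \<Longrightarrow> j \<in> V \<Longrightarrow> w i j \<ge> 0" using G unfolding weighted_graph_def by auto
  define N where "N = real (card V)"
  define s where "s = real (card S)"
  define e where "e = real (card S\<epsilon>)"
  define a where "a = \<alpha> * (1 - \<epsilon>) / (1 + \<alpha>)"
  have finS: "finite S" using fin SS(1) finite_subset by blast
  have finE: "finite S\<epsilon>" using fin Seps(1) finite_subset by blast
  have s0: "s > 0" using finS SS(2) unfolding s_def by (simp add: card_gt_0_iff)
  have e0: "e > 0" using finE Seps(2) unfolding e_def by (simp add: card_gt_0_iff)
  have N0: "N > 0" using fin SS(2) SS(1) unfolding N_def by (auto simp: card_gt_0_iff)
  have cS: "real (card (V - S)) = N - s" unfolding N_def s_def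
    using fin SS(1) finS by (simp add: card_Diff_subset card_mono of_nat_diff)
  have cE: "real (card (V - S\<epsilon>)) = N - e" unfolding N_def e_def
    using fin Seps(1) finE by (simp add: card_Diff_subset card_mono of_nat_diff)
  have sN: "s \<le> N" unfolding s_def N_def using fin SS(1) by (simp add: card_mono)
  have cutE: "cut V w S\<epsilon> \<ge> 0" unfolding cut_def
    by (intro sum_nonneg) (use nn Seps(1) in auto)
  have vE: "vol V w S\<epsilon> \<ge> 0" unfolding vol_def deg_def
    by (intro sum_nonneg) (use nn Seps(1) in auto)
  have a0: "a > 0" unfolding a_def using alpha eps by simp
  have cutS: "cut V w S = conductance V w S * vol V w S"
    unfolding conductance_def using volS by simp
  have t3: "\<tau> * s \<le> a * vol V w S - cut V w S"
  proof -
    have "\<tau> * s \<le> (a - conductance V w S) * avg_deg V w S * s"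
      using tau(3) s0 unfolding a_def by (simp add: mult_right_mono)
    also have "\<dots> = a * vol V w S - cut V w S"
      unfolding avg_deg_def cutS s_def[symmetric] using s0 by (simp add: field_simps)
    finally show ?thesis .
  qed
  have t2: "\<alpha> * vol V w S\<epsilon> \<le> \<tau> * e"
  proof -
    have "\<alpha> * avg_deg V w S\<epsilon> * e \<le> \<tau> * e" using tau(2) e0 by (simp add: mult_right_mono)
    thus ?thesis unfolding avg_deg_def e_def[symmetric] using e0 by (simp add: field_simps)
  qed
  have up: "core_cut V w \<tau> S \<le> a"
  proof -
    have den: "vol V w S + \<tau> * s > 0" using volS tau(1) s0 by (simp add: add_pos_pos)
    have "\<tau> / N * s * (N - s) \<le> \<tau> * s"
    proof -
      have "\<tau> / N * s * (N - s) = \<tau> * s * ((N - s) / N)" by simp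
      also have "\<dots> \<le> \<tau> * s * 1"
        using tau(1) s0 N0 sN by (intro mult_left_mono) auto
      finally show ?thesis by simp
    qed
    hence "cut V w S + \<tau> / N * s * (N - s) \<le> a * (vol V w S + \<tau> * s)"
      using t3 a0 tau(1) s0 by (smt (verit) mult_pos_pos distrib_left)
    thus ?thesis unfolding core_cut_def N_def[symmetric] s_def[symmetric] cS
      using den by (simp add: divide_le_eq)
  qed
  have low: "a < core_cut V w \<tau> S\<epsilon>"
  proof -
    have den: "vol V w S\<epsilon> + \<tau> * e > 0" using vE tau(1) e0 by (simp add: add_nonneg_pos)
    have h1: "a * (vol V w S\<epsilon> + \<tau> * e) \<le> (1 - \<epsilon>) * \<tau> * e"
    proof -
      have "a * (vol V w S\<epsilon> + \<tau> * e) = (1 - \<epsilon>) / (1 + \<alpha>) * (\<alpha> * vol V w S\<epsilon> + \<alpha> * (\<tau> * e))"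
        unfolding a_def by (simp add: field_simps)
      also have "\<dots> \<le> (1 - \<epsilon>) / (1 + \<alpha>) * (\<tau> * e + \<alpha> * (\<tau> * e))"
        using t2 eps alpha by (intro mult_left_mono) auto
      also have "\<dots> = (1 - \<epsilon>) * \<tau> * e" using alpha by (simp add: field_simps)
      finally show ?thesis .
    qed
    have h2: "(1 - \<epsilon>) * \<tau> * e < \<tau> / N * e * (N - e)"
    proof -
      have "1 - \<epsilon> < (N - e) / N" using c1(1) N0 unfolding e_def[symmetric] N_def[symmetric]
        by (simp add: field_simps)
      hence "\<tau> * e * (1 - \<epsilon>) < \<tau> * e * ((N - e) / N)" using tau(1) e0 by (intro mult_strict_left_mono) auto
      thus ?thesis by (simp add: field_simps)
    qed
    have "a * (vol V w S\<epsilon> + \<tau> * e) < cut V w S\<epsilon> + \<tau> / N * e * (N - e)"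
      using h1 h2 cutE by linarith
    thus ?thesis unfolding core_cut_def N_def[symmetric] e_def[symmetric] cE
      using den by (simp add: less_divide_eq)
  qed
  show ?thesis using up low by linarith
qed

end
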